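(* A regular $n$-tournament is $(n-1)$-spectrally monomorphic if and only if it is $(n-1)$-skew-spectrally monomorphic.
   Context: An $n$-tournament is a digraph in which every pair of distinct vertices is joined by exactly one arc. Its adjacency matrix $A=(a_{ij})$ has $a_{ij}=1$ if $v_i$ dominates $v_j$ and $0$ otherwise; its skew-adjacency matrix is $S=A-A^{\top}$. A tournament is regular if all its vertices have the same out-degree. A tournament is $k$-spectrally monomorphic (resp. $k$-skew-spectrally monomorphic) if all $k\times k$ principal submatrices of $A$ (resp. of $S$) have the same characteristic polynomial $\det(zI-M)$. *)

theory Defs
  imports "Jordan_Normal_Form.Char_Poly" "Jordan_Normal_Form.DL_Submatrix"
begin

text \<open>An n-tournament on vertex set {0..<n}: T i j means v_i dominates v_j.
  Every pair of distinct vertices is joined by exactly one arc; no loops.\<close>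
definition tournament :: "nat \<Rightarrow> (nat \<Rightarrow> nat \<Rightarrow> bool) \<Rightarrow> bool" where
  "tournament n T \<longleftrightarrow>
     (\<forall>i<n. \<not> T i i) \<and> (\<forall>i<n. \<forall>j<n. i \<noteq> j \<longrightarrow> (T i j \<longleftrightarrow> \<not> T j i))"

definition out_degree :: "nat \<Rightarrow> (nat \<Rightarrow> nat \<Rightarrow> bool) \<Rightarrow> nat \<Rightarrow> nat" where
  "out_degree n T i = card {j. j < n \<and> T i j}"

definition regular_tournament :: "nat \<Rightarrow> (nat \<Rightarrow> nat \<Rightarrow> bool) \<Rightarrow> bool" where
  "regular_tournament n T \<longleftrightarrow> tournament n T \<and>
     (\<forall>i<n. \<forall>j<n. out_degree n T i = out_degree n T j)"

definition adj_mat :: "nat \<Rightarrow> (nat \<Rightarrow> nat \<Rightarrow> bool) \<Rightarrow> int mat" where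
  "adj_mat n T = mat n n (\<lambda>(i,j). if T i j then 1 else 0)"

definition skew_adj_mat :: "nat \<Rightarrow> (nat \<Rightarrow> nat \<Rightarrow> bool) \<Rightarrow> int mat" where
  "skew_adj_mat n T = adj_mat n T - transpose_mat (adj_mat n T)"

definition principal_submatrix :: "'a mat \<Rightarrow> nat set \<Rightarrow> 'a mat" where
  "principal_submatrix M I = submatrix M I I"

definition k_char_poly_monomorphic :: "nat \<Rightarrow> 'a :: comm_ring_1 mat \<Rightarrow> bool" where
  "k_char_poly_monomorphic k M \<longleftrightarrow>
     (\<forall>I J. I \<subseteq> {0..<dim_row M} \<and> card I = k \<and> J \<subseteq> {0..<dim_row M} \<and> card J = k \<longrightarrow>
        char_poly (principal_submatrix M I) = char_poly (principal_submatrix M J))"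

definition spectrally_monomorphic :: "nat \<Rightarrow> nat \<Rightarrow> (nat \<Rightarrow> nat \<Rightarrow> bool) \<Rightarrow> bool" where
  "spectrally_monomorphic k n T \<longleftrightarrow> k_char_poly_monomorphic k (adj_mat n T)"

definition skew_spectrally_monomorphic :: "nat \<Rightarrow> nat \<Rightarrow> (nat \<Rightarrow> nat \<Rightarrow> bool) \<Rightarrow> bool" where
  "skew_spectrally_monomorphic k n T \<longleftrightarrow> k_char_poly_monomorphic k (skew_adj_mat n T)"

end

theory Submission
  imports Defs
begin

definition ins :: "nat \<Rightarrow> nat \<Rightarrow> nat" where "ins v i = (if i < v then i else Suc i)"
lemma det_col_single:
  fixes X :: "'a::comm_ring_1 mat"
  assumes X: "X \<in> carrier_mat n n" and v: "v < n"
    and z: "\<And>i. i < n \<Longrightarrow> i \<noteq> v \<Longrightarrow> X $$ (i,v) = 0"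
  shows "det X = X $$ (v,v) * det (mat_delete X v v)"
proof -
  have "det X = (\<Sum>i<n. X $$ (i,v) * cofactor X i v)" by (rule laplace_expansion_column[OF X v])
  also have "\<dots> = X $$ (v,v) * cofactor X v v"
    by (subst sum.remove[of _ v], insert v z, auto intro!: sum.neutral)
  finally show ?thesis unfolding cofactor_def by (simp add: minus_one_power_iff)
qed

lemma mat_delete_mat: "mat_delete (mat n n f) v v = mat (n-1) (n-1) (\<lambda>(i,j). f (ins v i, ins v j))"
  unfolding mat_delete_def ins_def by (rule eq_matI, auto)

lemma det_corner:
  fixes X Y :: "'a::comm_ring_1 mat"
  assumes X: "X \<in> carrier_mat n n" and Y: "Y \<in> carrier_mat n n" and v: "v < n"
    and e: "\<And>i j. i < n \<Longrightarrow> j < n \<Longrightarrow> (i,j) \<noteq> (v,v) \<Longrightarrow> X $$ (i,j) = Y $$ (i,j)"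
  shows "det X = det Y + (X $$ (v,v) - Y $$ (v,v)) * det (mat_delete X v v)"
proof -
  have cof: "cofactor X i v = cofactor Y i v" if i: "i < n" for i
  proof -
    have "mat_delete X i v = mat_delete Y i v"
      unfolding mat_delete_def using X Y i v e by (intro eq_matI, auto)
    thus ?thesis unfolding cofactor_def by simp
  qed
  have "det X = (\<Sum>i<n. X $$ (i,v) * cofactor X i v)" by (rule laplace_expansion_column[OF X v])
  also have "\<dots> = (\<Sum>i<n. Y $$ (i,v) * cofactor Y i v) + (\<Sum>i<n. (X $$ (i,v) - Y $$ (i,v)) * cofactor X i v)"
    by (simp add: cof sum.distrib[symmetric] algebra_simps)
  also have "(\<Sum>i<n. Y $$ (i,v) * cofactor Y i v) = det Y" by (rule laplace_expansion_column[OF Y v, symmetric])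
  also have "(\<Sum>i<n. (X $$ (i,v) - Y $$ (i,v)) * cofactor X i v) = (X $$ (v,v) - Y $$ (v,v)) * cofactor X v v"
    by (subst sum.remove[of _ v], insert v e, auto intro!: sum.neutral)
  finally show ?thesis unfolding cofactor_def by (simp add: minus_one_power_iff)
qed

lemma ins_neq: "ins v i \<noteq> v" unfolding ins_def by auto
lemma ins_inj: "ins v i = ins v j \<longleftrightarrow> i = j" unfolding ins_def by auto
lemma ins_lt: "i < m \<Longrightarrow> n = Suc m \<Longrightarrow> ins v i < n" unfolding ins_def by auto

lemma key:
  fixes k :: "nat \<Rightarrow> nat \<Rightarrow> int"
  assumes n: "n = Suc m" and v: "v < n"
    and rows: "\<And>i. i < n \<Longrightarrow> (\<Sum>j<n. k i j) = w"
    and cols: "\<And>j. j < n \<Longrightarrow> (\<Sum>i<n. k i j) = w"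
  shows "w^2 * det (mat m m (\<lambda>(i,j). k (ins v i) (ins v j) - 1)) =
     (w^2 - of_nat n * w) * det (mat m m (\<lambda>(i,j). k (ins v i) (ins v j))) + det (mat n n (\<lambda>(i,j). k i j))"
proof -
  have vv[simp]: "v < n" by (rule v)
  define K where "K = mat n n (\<lambda>(i,j). k i j)"
  define L :: "int mat" where "L = mat n n (\<lambda>(i,j). if i = v then 1 else if i = j then 1 else 0)"
  define R where "R = transpose_mat L"
  define LK where "LK = mat n n (\<lambda>(i,j). if i = v then w else k i j)"
  define Q where "Q = mat n n (\<lambda>(i,j). if i = v \<and> j = v then of_nat n * w else if i = v \<or> j = v then w else k i j)"
  define Q0 where "Q0 = mat n n (\<lambda>(i,j). if i = v \<and> j = v then 0 else if i = v \<or> j = v then w else k i j)"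
  define P0 where "P0 = mat n n (\<lambda>(i,j). if i = v \<and> j = v then 0 else if i = v \<or> j = v then 1 else k i j)"
  define P1 where "P1 = mat n n (\<lambda>(i,j). if i = v \<and> j = v then 1 else if i = v \<or> j = v then 1 else k i j)"
  define M' where "M' = mat n n (\<lambda>(i,j). if i = v then 1 else if j = v then 0 else k i j - 1)"
  define Kd where "Kd = mat m m (\<lambda>(i,j). k (ins v i) (ins v j))"
  define Ed where "Ed = mat m m (\<lambda>(i,j). k (ins v i) (ins v j) - 1)"
  have carr: "K \<in> carrier_mat n n" "L \<in> carrier_mat n n" "R \<in> carrier_mat n n" "LK \<in> carrier_mat n n"
    "Q \<in> carrier_mat n n" "Q0 \<in> carrier_mat n n" "P0 \<in> carrier_mat n n" "P1 \<in> carrier_mat n n"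
    "M' \<in> carrier_mat n n"
    unfolding K_def L_def R_def LK_def Q_def Q0_def P0_def P1_def M'_def by auto
  have detL: "det L = 1"
  proof -
    have "det L = L $$ (v,v) * det (mat_delete L v v)"
      by (rule det_col_single[OF carr(2) v], insert v, auto simp: L_def)
    also have "mat_delete L v v = 1\<^sub>m m" unfolding L_def mat_delete_mat using n
      by (intro eq_matI, auto simp: ins_neq ins_inj)
    finally show ?thesis using v by (simp add: L_def)
  qed
  have detR: "det R = 1" unfolding R_def using det_transpose[OF carr(2)] detL by simp
  have LK: "L * K = LK"
  proof (rule eq_matI)
    fix i j assume i: "i < dim_row LK" and j: "j < dim_col LK"
    hence i: "i < n" and j: "j < n" by (auto simp: LK_def)
    have "(L * K) $$ (i,j) = (\<Sum>l<n. L $$ (i,l) * k l j)"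
      using i j carr by (simp add: scalar_prod_def K_def lessThan_atLeast0)
    also have "\<dots> = LK $$ (i,j)"
    proof (cases "i = v")
      case True thus ?thesis using i j cols[OF j] by (simp add: L_def LK_def)
    next
      case False
      have "(\<Sum>l<n. L $$ (i,l) * k l j) = (\<Sum>l<n. if l = i then k l j else 0)"
        by (rule sum.cong, insert False i v, auto simp: L_def)
      thus ?thesis using False i j by (simp add: LK_def)
    qed
    finally show "(L * K) $$ (i,j) = LK $$ (i,j)" .
  qed (insert carr, auto)
  have LKR: "LK * R = Q"
  proof (rule eq_matI)
    fix i j assume i: "i < dim_row Q" and j: "j < dim_col Q"
    hence i: "i < n" and j: "j < n" by (auto simp: Q_def)
    have "(LK * R) $$ (i,j) = (\<Sum>l<n. LK $$ (i,l) * L $$ (j,l))"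
      using i j carr by (simp add: scalar_prod_def R_def lessThan_atLeast0)
    also have "\<dots> = Q $$ (i,j)"
    proof (cases "j = v")
      case True
      have "(\<Sum>l<n. LK $$ (i,l) * L $$ (j,l)) = (\<Sum>l<n. LK $$ (i,l))"
        by (rule sum.cong, insert True v, auto simp: L_def)
      also have "\<dots> = Q $$ (i,j)"
      proof (cases "i = v")
        case True2: True
        have "(\<Sum>l<n. LK $$ (i,l)) = (\<Sum>l<n. w)" by (rule sum.cong, insert v, auto simp: LK_def True2)
        thus ?thesis using True True2 i by (simp add: Q_def)
      next
        case False
        have "(\<Sum>l<n. LK $$ (i,l)) = (\<Sum>l<n. k i l)" by (rule sum.cong, insert False i, auto simp: LK_def)
        thus ?thesis using True False i rows[OF i] by (simp add: Q_def)
      qed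
      finally show ?thesis .
    next
      case False
      have "(\<Sum>l<n. LK $$ (i,l) * L $$ (j,l)) = (\<Sum>l<n. if l = j then LK $$ (i,l) else 0)"
        by (rule sum.cong, insert False j v, auto simp: L_def)
      thus ?thesis using False i j by (simp add: LK_def Q_def)
    qed
    finally show "(LK * R) $$ (i,j) = Q $$ (i,j)" .
  qed (insert carr, auto simp: R_def L_def Q_def LK_def)
  have detQ: "det Q = det K"
  proof -
    have "det Q = det (L * K * R)" using LK LKR by simp
    also have "\<dots> = det (L * K) * det R" by (rule det_mult[of _ n], insert carr, auto)
    also have "det (L * K) = det L * det K" by (rule det_mult[OF carr(2) carr(1)])
    finally show ?thesis using detL detR by simp
  qed
  have mdQ: "mat_delete Q v v = Kd" unfolding Q_def Kd_def mat_delete_mat using n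
    by (intro eq_matI, auto simp: ins_neq)
  have mdP1: "mat_delete P1 v v = Kd" unfolding P1_def Kd_def mat_delete_mat using n
    by (intro eq_matI, auto simp: ins_neq)
  have mdM: "mat_delete M' v v = Ed" unfolding M'_def Ed_def mat_delete_mat using n
    by (intro eq_matI, auto simp: ins_neq)
  have Q_Q0: "det Q = det Q0 + of_nat n * w * det Kd"
    using det_corner[OF carr(5) carr(6) v] v unfolding mdQ by (simp add: Q_def Q0_def)
  have P1_P0: "det P1 = det P0 + det Kd"
    using det_corner[OF carr(8) carr(7) v] v unfolding mdP1 by (simp add: P1_def P0_def)
  have Q0_P0: "det Q0 = w^2 * det P0"
  proof -
    have "Q0 = multrow v w (transpose_mat (multrow v w (transpose_mat P0)))"
      unfolding Q0_def P0_def by (rule eq_matI, auto)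
    hence "det Q0 = w * det (transpose_mat (multrow v w (transpose_mat P0)))"
      using det_multrow[OF v, of _ w] carr by simp
    also have "det (transpose_mat (multrow v w (transpose_mat P0))) = det (multrow v w (transpose_mat P0))"
      by (rule det_transpose, insert carr, auto)
    also have "\<dots> = w * det (transpose_mat P0)" by (rule det_multrow[OF v], insert carr, auto)
    also have "det (transpose_mat P0) = det P0" by (rule det_transpose[OF carr(7)])
    finally show ?thesis by (simp add: power2_eq_square)
  qed
  have RM: "R * M' = P1"
  proof (rule eq_matI)
    fix i j assume i: "i < dim_row P1" and j: "j < dim_col P1"
    hence i: "i < n" and j: "j < n" by (auto simp: P1_def)
    have "(R * M') $$ (i,j) = (\<Sum>l<n. L $$ (l,i) * M' $$ (l,j))"
      using i j carr by (simp add: scalar_prod_def R_def lessThan_atLeast0)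
    also have "\<dots> = P1 $$ (i,j)"
    proof (cases "i = v")
      case True
      have "(\<Sum>l<n. L $$ (l,i) * M' $$ (l,j)) = (\<Sum>l<n. if l = v then M' $$ (l,j) else 0)"
        by (rule sum.cong, insert True v, auto simp: L_def)
      thus ?thesis using True v j by (simp add: M'_def P1_def)
    next
      case False
      have "(\<Sum>l<n. L $$ (l,i) * M' $$ (l,j)) = (\<Sum>l<n. (if l = v then M' $$ (l,j) else 0) + (if l = i then M' $$ (l,j) else 0))"
        by (rule sum.cong, insert False i v, auto simp: L_def)
      also have "\<dots> = M' $$ (v,j) + M' $$ (i,j)" using v i by (simp add: sum.distrib)
      finally show ?thesis using False v i j by (simp add: M'_def P1_def)
    qed
    finally show "(R * M') $$ (i,j) = P1 $$ (i,j)" .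
  qed (insert carr, auto simp: R_def L_def P1_def M'_def)
  have detM: "det M' = det Ed"
    using det_col_single[OF carr(9) v] v unfolding mdM by (simp add: M'_def)
  have "det P1 = det Ed" using RM det_mult[OF carr(3) carr(9)] detR detM by simp
  hence "w^2 * det Ed = w^2 * det P0 + w^2 * det Kd" using P1_P0 by (metis distrib_left add.commute)
  also have "\<dots> = det K - of_nat n * w * det Kd + w^2 * det Kd" using Q0_P0 Q_Q0 detQ by simp
  finally show ?thesis unfolding Ed_def Kd_def K_def by (simp add: algebra_simps)
qed

lemma pick_del: assumes "v < n" shows "i < n - 1 \<Longrightarrow> pick ({0..<n} - {v}) i = ins v i"
proof (induction i)
  case 0
  show ?case
  proof (cases "v = 0")
    case True
    thus ?thesis using 0 by (auto simp: ins_def intro!: Least_equality)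
  next
    case False
    thus ?thesis using 0 assms by (auto simp: ins_def intro!: Least_equality)
  qed
next
  case (Suc i)
  hence IH: "pick ({0..<n} - {v}) i = ins v i" by simp
  show ?case unfolding pick.simps IH
    by (rule Least_equality, insert Suc.prems assms, auto simp: ins_def split: if_splits)
qed

lemma principal_del:
  assumes M: "M \<in> carrier_mat n n" and v: "v < n"
  shows "principal_submatrix M ({0..<n} - {v}) = mat (n-1) (n-1) (\<lambda>(i,j). M $$ (ins v i, ins v j))"
proof -
  have c: "card {i. i < n \<and> i \<in> {0..<n} - {v}} = n - 1"
  proof -
    have "{i. i < n \<and> i \<in> {0..<n} - {v}} = {0..<n} - {v}" by auto
    thus ?thesis using v by simp
  qed
  show ?thesis unfolding principal_submatrix_def submatrix_def using M c
    by (intro eq_matI, auto simp: pick_del[OF v])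
qed

lemma card_del: assumes "I \<subseteq> {0..<n}" "card I = n - 1" "0 < n"
  shows "\<exists>v<n. I = {0..<n} - {v}"
proof -
  have "card ({0..<n} - I) = 1" using assms by (simp add: card_Diff_subset finite_subset)
  then obtain v where v: "{0..<n} - I = {v}" by (auto simp: card_Suc_eq)
  hence "v < n" by auto
  moreover have "I = {0..<n} - {v}" using v assms(1) by auto
  ultimately show ?thesis by blast
qed

lemma char_poly_eval:
  fixes f :: "nat \<Rightarrow> nat \<Rightarrow> 'a::comm_ring_1"
  shows "poly (char_poly (mat m m (\<lambda>(i,j). f i j))) z = det (mat m m (\<lambda>(i,j). (if i = j then z else 0) - f i j))"
  unfolding char_poly_def
  by (rule poly_det_cong[of _ m], auto simp: char_poly_matrix_def)

lemma poly_eq_inf: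
  fixes p q :: "int poly"
  assumes "\<And>k::nat. poly p (f k) = poly q (f k)" "inj f"
  shows "p = q"
proof (rule ccontr)
  assume "p \<noteq> q"
  hence "p - q \<noteq> 0" by simp
  hence fin: "finite {x. poly (p - q) x = 0}" by (rule poly_roots_finite)
  have "range f \<subseteq> {x. poly (p - q) x = 0}" using assms(1) by auto
  hence "finite (range f)" using fin finite_subset by blast
  thus False using range_inj_infinite[OF assms(2)] by simp
qed

lemma mono_iff:
  assumes M: "M \<in> carrier_mat n n" and n: "0 < n"
  shows "k_char_poly_monomorphic (n-1) M \<longleftrightarrow>
    (\<forall>v<n. \<forall>v'<n. char_poly (principal_submatrix M ({0..<n}-{v})) = char_poly (principal_submatrix M ({0..<n}-{v'})))"
proof
  assume H: "k_char_poly_monomorphic (n-1) M"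
  show "\<forall>v<n. \<forall>v'<n. char_poly (principal_submatrix M ({0..<n}-{v})) = char_poly (principal_submatrix M ({0..<n}-{v'}))"
  proof (intro allI impI)
    fix v v' assume vv: "v < n" "v' < n"
    have d: "dim_row M = n" using M by simp
    have c1: "card ({0..<n}-{v}) = n-1" "card ({0..<n}-{v'}) = n-1" using vv by simp_all
    have "({0..<n}-{v}) \<subseteq> {0..<dim_row M} \<and> card ({0..<n}-{v}) = n - 1 \<and> ({0..<n}-{v'}) \<subseteq> {0..<dim_row M} \<and> card ({0..<n}-{v'}) = n - 1"
      unfolding d using c1 by blast
    thus "char_poly (principal_submatrix M ({0..<n}-{v})) = char_poly (principal_submatrix M ({0..<n}-{v'}))"
      by (rule H[unfolded k_char_poly_monomorphic_def, rule_format])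
  qed
next
  assume H: "\<forall>v<n. \<forall>v'<n. char_poly (principal_submatrix M ({0..<n}-{v})) = char_poly (principal_submatrix M ({0..<n}-{v'}))"
  show "k_char_poly_monomorphic (n-1) M" unfolding k_char_poly_monomorphic_def
  proof (intro allI impI)
    fix I J assume "I \<subseteq> {0..<dim_row M} \<and> card I = n - 1 \<and> J \<subseteq> {0..<dim_row M} \<and> card J = n - 1"
    hence "I \<subseteq> {0..<n}" "card I = n - 1" "J \<subseteq> {0..<n}" "card J = n - 1" using M[unfolded carrier_mat_def] by simp_all
    then obtain v v' where vv: "v < n" "I = {0..<n}-{v}" "v' < n" "J = {0..<n}-{v'}"
      using card_del[OF _ _ n] by meson
    show "char_poly (principal_submatrix M I) = char_poly (principal_submatrix M J)" unfolding vv(2,4) by (rule H[rule_format, OF vv(1,3)])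
  qed
qed

lemma mono_zero: assumes "dim_row M = 0" shows "k_char_poly_monomorphic k M"
  unfolding k_char_poly_monomorphic_def assms by auto

theorem proposition5p4:
  fixes n :: nat and T :: "nat \<Rightarrow> nat \<Rightarrow> bool"
  assumes "regular_tournament n T"
  shows "spectrally_monomorphic (n - 1) n T \<longleftrightarrow> skew_spectrally_monomorphic (n - 1) n T"
proof (cases "n = 0")
  case True
  show ?thesis unfolding spectrally_monomorphic_def skew_spectrally_monomorphic_def
    by (simp add: mono_zero True Defs.adj_mat_def skew_adj_mat_def)
next
  case False
  hence n0: "0 < n" by simp
  define m where "m = n - 1"
  have nm: "n = Suc m" using n0 m_def by simp
  have RT: "tournament n T \<and> (\<forall>i<n. \<forall>j<n. out_degree n T i = out_degree n T j)"
    using assms unfolding regular_tournament_def .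
  have tour: "tournament n T" using RT by (rule conjunct1)
  have deg: "\<And>i j. i < n \<Longrightarrow> j < n \<Longrightarrow> out_degree n T i = out_degree n T j"
    by (rule RT[THEN conjunct2, rule_format])
  define a :: "nat \<Rightarrow> nat \<Rightarrow> int" where "a i j = (if T i j then 1 else 0)" for i j
  define s where "s i j = a i j - a j i" for i j
  define A where "A = adj_mat n T"
  define S where "S = skew_adj_mat n T"
  have A: "A = mat n n (\<lambda>(i,j). a i j)" unfolding A_def Defs.adj_mat_def a_def by simp
  have Acarr: "A \<in> carrier_mat n n" unfolding A by simp
  have Scarr: "S \<in> carrier_mat n n" unfolding S_def skew_adj_mat_def Defs.adj_mat_def unfolding carrier_mat_def by simp
  have Sij: "S $$ (i,j) = s i j" if "i < n" "j < n" for i j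
    using that unfolding S_def skew_adj_mat_def A[unfolded A_def] s_def by simp
  have aii: "a i i = 0" if "i < n" for i using tour[unfolded tournament_def, THEN conjunct1, rule_format, OF that] unfolding a_def by simp
  have aji: "a j i = 1 - a i j" if "i < n" "j < n" "i \<noteq> j" for i j
  proof -
    have "T i j \<longleftrightarrow> \<not> T j i" using tour[unfolded tournament_def, THEN conjunct2, rule_format, OF that] .
    thus ?thesis unfolding a_def by simp
  qed
  have sii: "s i i = 0" for i unfolding s_def by simp
  have sji: "s j i = - s i j" for i j unfolding s_def by simp
  have outd: "(\<Sum>j<n. a i j) = int (out_degree n T i)" for i
  proof -
    have "(\<Sum>j<n. a i j) = (\<Sum>j\<in>{j\<in>{..<n}. T i j}. (1::int))"
      unfolding a_def by (rule sum.inter_filter[symmetric], simp)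
    also have "\<dots> = int (card {j\<in>{..<n}. T i j})" by simp
    also have "{j\<in>{..<n}. T i j} = {j. j < n \<and> T i j}" by auto
    finally show ?thesis unfolding out_degree_def .
  qed
  have rs1: "(\<Sum>j<n. s i j) = 2 * int (out_degree n T i) - (int n - 1)" if i: "i < n" for i
  proof -
    have "(\<Sum>j<n. (1 - a i j)) = (1 - a i i) + (\<Sum>j\<in>{..<n} - {i}. (1 - a i j))"
      by (rule sum.remove, auto simp: i)
    also have "(\<Sum>j\<in>{..<n} - {i}. (1 - a i j)) = (\<Sum>j\<in>{..<n} - {i}. a j i)"
    proof (rule sum.cong[OF refl])
      fix j assume "j \<in> {..<n} - {i}"
      thus "1 - a i j = a j i" using aji[OF i, of j] by simp
    qed
    also have "(1 - a i i) + \<dots> = 1 + (\<Sum>j<n. a j i)"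
      using aii[OF i] sum.remove[of "{..<n}" i "\<lambda>j. a j i"] i by simp
    finally have "(\<Sum>j<n. a j i) = int n - (\<Sum>j<n. a i j) - 1"
      using aii[OF i] by (simp add: sum_subtractf)
    thus ?thesis unfolding s_def sum_subtractf outd by simp
  qed
  have tot: "(\<Sum>i<n. \<Sum>j<n. s i j) = 0"
  proof -
    have "(\<Sum>i<n. \<Sum>j<n. a j i) = (\<Sum>i<n. \<Sum>j<n. a i j)" by (rule sum.swap)
    thus ?thesis unfolding s_def sum_subtractf by simp
  qed
  have rs: "(\<Sum>j<n. s i j) = 0" if i: "i < n" for i
  proof -
    have "(\<Sum>i<n. \<Sum>j<n. s i j) = (\<Sum>i<n. (\<Sum>j<n. s 0 j))"
    proof (rule sum.cong[OF refl])
      fix i assume "i \<in> {..<n}"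
      hence i: "i < n" by simp
      show "(\<Sum>j<n. s i j) = (\<Sum>j<n. s 0 j)" using rs1[OF i] rs1[OF n0] deg[OF i n0] by simp
    qed
    hence "int n * (\<Sum>j<n. s 0 j) = 0" using tot by simp
    hence "(\<Sum>j<n. s 0 j) = 0" using n0 by simp
    thus ?thesis using rs1[OF i] rs1[OF n0] deg[OF i n0] by simp
  qed
  have cs: "(\<Sum>i<n. s i j) = 0" if j: "j < n" for j
  proof -
    have "(\<Sum>i<n. s i j) = - (\<Sum>i<n. s j i)" by (subst sji, simp add: sum_negf)
    thus ?thesis using rs[OF j] by simp
  qed
  define kk where "kk w i j = (if i = j then w else 0) - s i j" for w :: int and i j
  define Ed where "Ed w v = det (mat m m (\<lambda>(i,j). kk w (ins v i) (ins v j) - 1))" for w v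
  define Kd where "Kd w v = det (mat m m (\<lambda>(i,j). kk w (ins v i) (ins v j)))" for w v
  define Fu where "Fu w = det (mat n n (\<lambda>(i,j). kk w i j))" for w
  have keyI: "w^2 * Ed w v = (w^2 - int n * w) * Kd w v + Fu w" if v: "v < n" for w v
    unfolding Ed_def Kd_def Fu_def
  proof (rule key[OF nm v])
    show "(\<Sum>j<n. kk w i j) = w" if "i < n" for i
      using that rs[OF that] unfolding kk_def by (simp add: sum_subtractf)
    show "(\<Sum>i<n. kk w i j) = w" if "j < n" for j
    proof -
      have "(\<Sum>i<n. (if i = j then w else 0)) = w" using that by (simp add: sum.delta')
      thus ?thesis using cs[OF that] unfolding kk_def by (simp add: sum_subtractf)
    qed
  qed
  define cA where "cA v = char_poly (principal_submatrix A ({0..<n}-{v}))" for v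
  define cS where "cS v = char_poly (principal_submatrix S ({0..<n}-{v}))" for v
  have F2: "poly (cS v) w = Kd w v" if v: "v < n" for v w
  proof -
    have "poly (cS v) w = det (mat m m (\<lambda>(i,j). (if i = j then w else 0) - S $$ (ins v i, ins v j)))"
      unfolding cS_def principal_del[OF Scarr v] m_def by (rule char_poly_eval[where f = "\<lambda>i j. S $$ (ins v i, ins v j)"])
    also have "mat m m (\<lambda>(i,j). (if i = j then w else 0) - S $$ (ins v i, ins v j))
       = mat m m (\<lambda>(i,j). kk w (ins v i) (ins v j))"
      by (rule eq_matI, auto simp: kk_def Sij ins_lt[OF _ nm] ins_inj)
    finally show ?thesis unfolding Kd_def .
  qed
  have F1: "2^m * poly (cA v) z = Ed (2*z+1) v" if v: "v < n" for v z
  proof -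
    define X where "X = mat m m (\<lambda>(i,j). (if i = j then z else 0) - A $$ (ins v i, ins v j))"
    have "poly (cA v) z = det X"
      unfolding cA_def principal_del[OF Acarr v] m_def X_def by (rule char_poly_eval[where f = "\<lambda>i j. A $$ (ins v i, ins v j)"])
    moreover have "det (2 \<cdot>\<^sub>m X) = 2 ^ m * det X" unfolding det_smult by (simp add: X_def)
    moreover have "2 \<cdot>\<^sub>m X = mat m m (\<lambda>(i,j). kk (2*z+1) (ins v i) (ins v j) - 1)"
    proof (rule eq_matI)
      fix i j assume ij: "i < dim_row (mat m m (\<lambda>(i,j). kk (2*z+1) (ins v i) (ins v j) - 1))"
        "j < dim_col (mat m m (\<lambda>(i,j). kk (2*z+1) (ins v i) (ins v j) - 1))"
      hence i: "i < m" and j: "j < m" by auto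
      have li: "ins v i < n" and lj: "ins v j < n" using ins_lt[OF i nm] ins_lt[OF j nm] .
      show "(2 \<cdot>\<^sub>m X) $$ (i,j) = mat m m (\<lambda>(i,j). kk (2*z+1) (ins v i) (ins v j) - 1) $$ (i,j)"
      proof (cases "i = j")
        case True
        thus ?thesis using i j li aii[OF li] unfolding X_def A kk_def by (simp add: sii)
      next
        case False
        hence ne: "ins v i \<noteq> ins v j" by (simp add: ins_inj)
        thus ?thesis using False i j li lj aji[OF li lj ne] unfolding X_def A kk_def s_def by simp
      qed
    qed (auto simp: X_def)
    ultimately show ?thesis unfolding Ed_def by simp
  qed
  have pw: "cA v = cA v' \<longleftrightarrow> cS v = cS v'" if v: "v < n" and v': "v' < n" for v v'
  proof
    assume H: "cA v = cA v'"
    show "cS v = cS v'"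
    proof (rule poly_eq_inf[where f = "\<lambda>k. 2 * (int k + int n) + 1"])
      show "inj (\<lambda>k::nat. 2 * (int k + int n) + 1)" by (rule injI, simp)
      fix k :: nat
      define x where "x = 2 * (int k + int n) + 1"
      have "Ed x v = Ed x v'" using F1[OF v, of "int k + int n"] F1[OF v', of "int k + int n"] H
        unfolding x_def by simp
      hence "(x^2 - int n * x) * Kd x v = (x^2 - int n * x) * Kd x v'"
        using keyI[OF v, of x] keyI[OF v', of x] by (metis add_right_cancel)
      moreover have "x^2 - int n * x \<noteq> 0"
      proof -
        have "x^2 - int n * x = x * (x - int n)" by (simp add: power2_eq_square algebra_simps)
        moreover have "x > 0" "x - int n > 0" unfolding x_def by auto
        ultimately show ?thesis by simp
      qed
      ultimately have "Kd x v = Kd x v'" by simp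
      thus "poly (cS v) (2 * (int k + int n) + 1) = poly (cS v') (2 * (int k + int n) + 1)"
        using F2[OF v] F2[OF v'] unfolding x_def by simp
    qed
  next
    assume H: "cS v = cS v'"
    show "cA v = cA v'"
    proof (rule poly_eq_inf[where f = "\<lambda>k. int k"])
      show "inj (\<lambda>k::nat. int k)" by (rule injI, simp)
      fix k :: nat
      define z where "z = int k"
      define x where "x = 2 * z + 1"
      have "Kd x v = Kd x v'" using F2[OF v, of x] F2[OF v', of x] H by simp
      hence "x^2 * Ed x v = x^2 * Ed x v'" using keyI[OF v, of x] keyI[OF v', of x] by simp
      moreover have "x^2 \<noteq> 0" unfolding x_def z_def by simp
      ultimately have "Ed x v = Ed x v'" by simp
      hence "(2::int)^m * poly (cA v) z = 2^m * poly (cA v') z" using F1[OF v, of z] F1[OF v', of z]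
        unfolding x_def by simp
      thus "poly (cA v) (int k) = poly (cA v') (int k)" unfolding z_def by simp
    qed
  qed
  have "spectrally_monomorphic (n - 1) n T \<longleftrightarrow> (\<forall>v<n. \<forall>v'<n. cA v = cA v')"
    unfolding spectrally_monomorphic_def cA_def A_def[symmetric] by (rule mono_iff[OF Acarr n0])
  also have "\<dots> \<longleftrightarrow> (\<forall>v<n. \<forall>v'<n. cS v = cS v')" using pw by blast
  also have "\<dots> \<longleftrightarrow> skew_spectrally_monomorphic (n - 1) n T"
    unfolding skew_spectrally_monomorphic_def cS_def S_def[symmetric] by (rule mono_iff[OF Scarr n0, symmetric])
  finally show ?thesis .
qed

end
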